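(* (1) The function $x\mapsto (2-x)K(x)-2E(x)$ is strictly increasing from $(0,1)$ onto $(0,+\infty)$. (2) For all $0<x<1$, $$(2-x)K(x)-2E(x)\ge \frac2\pi\big(E(x)^2-(1-x)K(x)^2\big).$$
   Context: $K(x)={\cal K}(\sqrt x)$ and $E(x)={\cal E}(\sqrt x)$ for $x\in[0,1)$, where ${\cal K}(r)=\int_0^{\pi/2}(1-r^2\sin^2t)^{-1/2}dt$ and ${\cal E}(r)=\int_0^{\pi/2}(1-r^2\sin^2t)^{1/2}dt$ are the complete elliptic integrals of the first and second kind. *)

theory Defs
  imports "HOL-Analysis.Analysis"
begin

text \<open>Complete elliptic integrals of the first and second kind, in the modulus r.\<close>
definition ellK :: "real \<Rightarrow> real" where
  "ellK r = integral {0..pi/2} (\<lambda>t. 1 / sqrt (1 - r\<^sup>2 * (sin t)\<^sup>2))"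

definition ellE :: "real \<Rightarrow> real" where
  "ellE r = integral {0..pi/2} (\<lambda>t. sqrt (1 - r\<^sup>2 * (sin t)\<^sup>2))"

definition K :: "real \<Rightarrow> real" where
  "K x = ellK (sqrt x)"

definition E :: "real \<Rightarrow> real" where
  "E x = ellE (sqrt x)"

end

theory Submission
  imports Defs
begin

lemma ftc_real:
  fixes F f :: "real \<Rightarrow> real"
  assumes "a \<le> b" "\<And>x. x \<in> {a..b} \<Longrightarrow> (F has_real_derivative f x) (at x)"
  shows "(f has_integral F b - F a) {a..b}"
  using assms(1) apply (rule fundamental_theorem_of_calculus)
  using assms(2) by (simp add: has_real_derivative_iff_has_vector_derivative[symmetric] has_field_derivative_at_within)

lemma sc: "sin x * sin x + cos x * cos x = (1::real)"
  using sin_cos_squared_add[of x] by (simp add: power2_eq_square)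

lemma int_sin2: "((\<lambda>t. (sin t)^2) has_integral pi/4) {0..pi/2}"
proof -
  have "((\<lambda>t. (sin t)^2) has_integral ((\<lambda>t. t/2 - sin t * cos t / 2) (pi/2) - (\<lambda>t. t/2 - sin t * cos t / 2) 0)) {0..pi/2}"
  proof (rule ftc_real)
    fix x :: real
    show "((\<lambda>t. t/2 - sin t * cos t / 2) has_real_derivative (sin x)^2) (at x)"
      apply (auto intro!: derivative_eq_intros simp: field_simps)
      using sc[of x] by algebra
  qed simp
  then show ?thesis by simp
qed

lemma int_cos2: "((\<lambda>t. (cos t)^2) has_integral pi/4) {0..pi/2}"
proof -
  have "((\<lambda>t. (cos t)^2) has_integral ((\<lambda>t. t/2 + sin t * cos t / 2) (pi/2) - (\<lambda>t. t/2 + sin t * cos t / 2) 0)) {0..pi/2}"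
  proof (rule ftc_real)
    fix x :: real
    show "((\<lambda>t. t/2 + sin t * cos t / 2) has_real_derivative (cos x)^2) (at x)"
      apply (auto intro!: derivative_eq_intros simp: field_simps)
      using sc[of x] by algebra
  qed simp
  then show ?thesis by simp
qed

lemma sin2_le1: "(sin t)^2 \<le> (1::real)"
  using sin_cos_squared_add[of t] by (smt (verit) zero_le_power2)

lemma w_pos: "x < (1::real) \<Longrightarrow> 0 < 1 - x * (sin t)^2"
proof (cases "x \<le> 0")
  case True then have "x * (sin t)^2 \<le> 0" by (simp add: mult_nonpos_nonneg)
  then show ?thesis by linarith
next
  case False
  assume "x < 1"
  have "x * (sin t)^2 \<le> x * 1" using False sin2_le1[of t] by (intro mult_left_mono) auto
  then show ?thesis using \<open>x<1\<close> by linarith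
qed

lemma w_ge: "0 \<le> x \<Longrightarrow> x < (1::real) \<Longrightarrow> 1 - x \<le> 1 - x * (sin t)^2"
proof -
  assume "0 \<le> x"
  have "x * (sin t)^2 \<le> x * 1" using \<open>0\<le>x\<close> sin2_le1[of t] by (intro mult_left_mono) auto
  then show ?thesis by simp
qed

lemma w_le1: "0 \<le> x \<Longrightarrow> 1 - x * (sin t)^2 \<le> (1::real)"
  by (simp add: zero_le_mult_iff)

lemma w_le: "x < (1::real) \<Longrightarrow> x * (sin t)^2 \<le> 1"
  using w_pos[of x t] by linarith

lemma w_ne: "x < (1::real) \<Longrightarrow> 1 - x * (sin t)^2 \<noteq> 0"
  using w_pos[of x t] by linarith

lemma w_ne2: "x < (1::real) \<Longrightarrow> x * (sin t)^2 \<noteq> 1"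
  using w_pos[of x t] by linarith

lemma w_nn: "x < (1::real) \<Longrightarrow> \<not> (1 - x * (sin t)^2 < 0)"
  using w_pos[of x t] by linarith

lemma sw_ne: "x < (1::real) \<Longrightarrow> sqrt (1 - x * (sin t)^2) \<noteq> 0"
  using w_pos[of x t] by simp

lemma sw_pos: "x < (1::real) \<Longrightarrow> 0 < sqrt (1 - x * (sin t)^2)"
  using w_pos[of x t] by simp

definition kk :: "real \<Rightarrow> real" where
  "kk x = integral {0..pi/2} (\<lambda>t. 1 / sqrt (1 - x * (sin t)^2))"
definition ee :: "real \<Rightarrow> real" where
  "ee x = integral {0..pi/2} (\<lambda>t. sqrt (1 - x * (sin t)^2))"
definition PP :: "real \<Rightarrow> real" where
  "PP x = integral {0..pi/2} (\<lambda>t. (sin t)^2 / sqrt (1 - x * (sin t)^2))"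
definition QQ :: "real \<Rightarrow> real" where
  "QQ x = integral {0..pi/2} (\<lambda>t. (cos t)^2 / sqrt (1 - x * (sin t)^2))"
definition RR :: "real \<Rightarrow> real" where
  "RR x = integral {0..pi/2} (\<lambda>t. (sin t)^2 / (2 * sqrt (1 - x * (sin t)^2) * (1 - x * (sin t)^2)))"

lemma cont_k: "x < 1 \<Longrightarrow> continuous_on S (\<lambda>t. 1 / sqrt (1 - x * (sin t)^2))"
  by (auto intro!: continuous_intros simp: sw_ne w_ne2)
lemma cont_e: "continuous_on S (\<lambda>t. sqrt (1 - x * (sin t)^2))"
  by (auto intro!: continuous_intros)
lemma cont_P: "x < 1 \<Longrightarrow> continuous_on S (\<lambda>t. (sin t)^2 / sqrt (1 - x * (sin t)^2))"
  by (auto intro!: continuous_intros simp: sw_ne w_ne2)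
lemma cont_Q: "x < 1 \<Longrightarrow> continuous_on S (\<lambda>t. (cos t)^2 / sqrt (1 - x * (sin t)^2))"
  by (auto intro!: continuous_intros simp: sw_ne w_ne2)
lemma cont_R: "x < 1 \<Longrightarrow> continuous_on S (\<lambda>t. (sin t)^2 / (2 * sqrt (1 - x * (sin t)^2) * (1 - x * (sin t)^2)))"
  by (auto intro!: continuous_intros simp: sw_ne w_ne2 w_ne)

lemma dk_pt: "x < 1 \<Longrightarrow> ((\<lambda>x. 1 / sqrt (1 - x * (sin t)^2)) has_field_derivative
   (sin t)^2 / (2 * sqrt (1 - x * (sin t)^2) * (1 - x * (sin t)^2))) (at x within U)"
  apply (auto intro!: derivative_eq_intros simp: w_ne2 w_pos w_nn sw_ne)
  using w_pos[of x t] apply linarith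
  using w_pos[of x t] by (simp add: abs_of_pos field_simps)

lemma cont_R2: "continuous_on ({-1<..<1} \<times> {0..pi/2}) (\<lambda>(x, t). (sin t)^2 / (2 * sqrt (1 - x * (sin t)^2) * (1 - x * (sin t)^2)))"
  by (auto intro!: continuous_intros simp: split_beta w_ne2 sw_ne w_ne)

lemma de_pt: "x < 1 \<Longrightarrow> ((\<lambda>x. sqrt (1 - x * (sin t)^2)) has_field_derivative
   - ((sin t)^2 / (2 * sqrt (1 - x * (sin t)^2)))) (at x within U)"
  apply (auto intro!: derivative_eq_intros simp: w_ne2 w_pos w_nn sw_ne)
  using w_pos[of x t] apply linarith
  by (simp add: field_simps)

lemma cont_mP2: "continuous_on ({-1<..<1} \<times> {0..pi/2}) (\<lambda>(x, t). - ((sin t)^2 / (2 * sqrt (1 - x * (sin t)^2))))"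
  by (auto intro!: continuous_intros simp: split_beta w_ne2 sw_ne)

lemma kk_deriv: assumes "x \<in> {-1<..<1}" shows "(kk has_real_derivative RR x) (at x)"
proof -
  have "((\<lambda>x. integral (cbox 0 (pi/2)) (\<lambda>t. 1 / sqrt (1 - x * (sin t)^2))) has_field_derivative
     integral (cbox 0 (pi/2)) (\<lambda>t. (sin t)^2 / (2 * sqrt (1 - x * (sin t)^2) * (1 - x * (sin t)^2)))) (at x within {-1<..<1})"
    by (rule leibniz_rule_field_derivative[where f="\<lambda>x t. 1 / sqrt (1 - x * (sin t)^2)"
         and fx="\<lambda>x t. (sin t)^2 / (2 * sqrt (1 - x * (sin t)^2) * (1 - x * (sin t)^2))"])
      (use assms in \<open>auto intro!: dk_pt integrable_continuous_interval cont_k cont_R2 simp: cbox_interval\<close>)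
  moreover have "kk = (\<lambda>x. integral {0..pi/2} (\<lambda>t. 1 / sqrt (1 - x * (sin t)^2)))"
    by (simp add: fun_eq_iff kk_def)
  ultimately show ?thesis using at_within_open[of x "{-1<..<1}"] assms by (simp add: RR_def cbox_interval)
qed

lemma ee_deriv: assumes "x \<in> {-1<..<1}" shows "(ee has_real_derivative - (PP x / 2)) (at x)"
proof -
  have "((\<lambda>x. integral (cbox 0 (pi/2)) (\<lambda>t. sqrt (1 - x * (sin t)^2))) has_field_derivative
     integral (cbox 0 (pi/2)) (\<lambda>t. - ((sin t)^2 / (2 * sqrt (1 - x * (sin t)^2))))) (at x within {-1<..<1})"
    by (rule leibniz_rule_field_derivative[where f="\<lambda>x t. sqrt (1 - x * (sin t)^2)"
         and fx="\<lambda>x t. - ((sin t)^2 / (2 * sqrt (1 - x * (sin t)^2)))"])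
      (use assms in \<open>auto intro!: de_pt integrable_continuous_interval cont_e cont_mP2 simp: cbox_interval\<close>)
  moreover have I: "integral {0..pi/2} (\<lambda>t. - ((sin t)^2 / (2 * sqrt (1 - x * (sin t)^2)))) = - (PP x / 2)"
  proof -
    have "(\<lambda>t. - ((sin t)^2 / (2 * sqrt (1 - x * (sin t)^2)))) = (\<lambda>t. - ((sin t)^2 / sqrt (1 - x * (sin t)^2) / 2))"
      by (simp add: fun_eq_iff)
    then show ?thesis unfolding PP_def by (simp only: integral_neg integral_divide)
  qed
  moreover have "ee = (\<lambda>x. integral {0..pi/2} (\<lambda>t. sqrt (1 - x * (sin t)^2)))"
    by (simp add: fun_eq_iff ee_def)
  ultimately show ?thesis using at_within_open[of x "{-1<..<1}"] assms by (simp only: cbox_interval I) simp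
qed

lemma int_k: "x < 1 \<Longrightarrow> (\<lambda>t. 1 / sqrt (1 - x * (sin t)^2)) integrable_on {0..pi/2}"
  by (intro integrable_continuous_interval cont_k)
lemma int_e: "(\<lambda>t. sqrt (1 - x * (sin t)^2)) integrable_on {0..pi/2}"
  by (intro integrable_continuous_interval cont_e)
lemma int_P: "x < 1 \<Longrightarrow> (\<lambda>t. (sin t)^2 / sqrt (1 - x * (sin t)^2)) integrable_on {0..pi/2}"
  by (intro integrable_continuous_interval cont_P)
lemma int_Q: "x < 1 \<Longrightarrow> (\<lambda>t. (cos t)^2 / sqrt (1 - x * (sin t)^2)) integrable_on {0..pi/2}"
  by (intro integrable_continuous_interval cont_Q)
lemma int_R: "x < 1 \<Longrightarrow> (\<lambda>t. (sin t)^2 / (2 * sqrt (1 - x * (sin t)^2) * (1 - x * (sin t)^2))) integrable_on {0..pi/2}"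
  by (intro integrable_continuous_interval cont_R)

lemma kPQ: assumes "x < 1" shows "kk x = PP x + QQ x"
proof -
  have "kk x = integral {0..pi/2} (\<lambda>t. (sin t)^2 / sqrt (1 - x * (sin t)^2) + (cos t)^2 / sqrt (1 - x * (sin t)^2))"
    unfolding kk_def by (rule integral_cong) (simp add: add_divide_distrib[symmetric])
  also have "\<dots> = PP x + QQ x" unfolding PP_def QQ_def
    by (rule integral_add[OF int_P[OF assms] int_Q[OF assms]])
  finally show ?thesis .
qed

lemma ekP: assumes "x < 1" shows "ee x = kk x - x * PP x"
proof -
  have "ee x = integral {0..pi/2} (\<lambda>t. 1 / sqrt (1 - x * (sin t)^2) - x * ((sin t)^2 / sqrt (1 - x * (sin t)^2)))"
    unfolding ee_def
  proof (rule integral_cong)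
    fix t
    have p: "0 < 1 - x * (sin t)^2" using w_pos[OF assms] .
    have "sqrt (1 - x * (sin t)^2) = (1 - x * (sin t)^2) / sqrt (1 - x * (sin t)^2)"
      using p by (simp add: real_div_sqrt)
    also have "\<dots> = 1 / sqrt (1 - x * (sin t)^2) - x * ((sin t)^2 / sqrt (1 - x * (sin t)^2))"
      by (simp add: diff_divide_distrib)
    finally show "sqrt (1 - x * (sin t)^2) = 1 / sqrt (1 - x * (sin t)^2) - x * ((sin t)^2 / sqrt (1 - x * (sin t)^2))" .
  qed
  also have "\<dots> = kk x - x * PP x" unfolding kk_def PP_def
    by (simp only: integral_diff[OF int_k[OF assms] integrable_on_mult_right[OF int_P[OF assms]]] integral_mult_right)
  finally show ?thesis .
qed

lemma alg1: fixes r x p q :: real assumes "0 < r" "r * r = 1 - x * p^2" "p^2 + q^2 = 1"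
  shows "((q * q - p * p) * r + p * q*(inverse r * (q * (p * x))))/ \<bar>1 - x * p^2\<bar> = q^2/r - (2 - x*2) * p^2/(2 * r*(1 - x * p^2))"
proof -
  have w: "1 - x * p^2 = r * r" using assms(2) by simp
  have "r * r > 0" using assms(1) by simp
  show ?thesis unfolding w using assms(1) \<open>r * r>0\<close>
    apply (simp add: field_simps)
    using assms(2,3) by algebra
qed

lemma dsc: "x < 1 \<Longrightarrow> ((\<lambda>t. sin t * cos t / sqrt (1 - x * (sin t)^2)) has_real_derivative
   ((cos t)^2 / sqrt (1 - x * (sin t)^2) - (1 - x) * 2 * ((sin t)^2 / (2 * sqrt (1 - x * (sin t)^2) * (1 - x * (sin t)^2))))) (at t)"
  apply (auto intro!: derivative_eq_intros simp: w_ne2 w_pos w_nn sw_ne)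
  using w_pos[of x t] apply linarith
  apply (rule alg1)
  using w_pos[of x t] apply simp
  using w_pos[of x t] apply simp
  apply (rule sin_cos_squared_add)
  done

lemma QR: assumes "x < 1" shows "QQ x = 2 * (1 - x) * RR x"
proof -
  let ?F = "\<lambda>t. sin t * cos t / sqrt (1 - x * (sin t)^2)"
  let ?D = "\<lambda>t. (cos t)^2 / sqrt (1 - x * (sin t)^2) - (1 - x) * 2 * ((sin t)^2 / (2 * sqrt (1 - x * (sin t)^2) * (1 - x * (sin t)^2)))"
  have "(?D has_integral ?F (pi/2) - ?F 0) {0..pi/2}"
    by (rule ftc_real) (simp, rule dsc[OF assms])
  then have "integral {0..pi/2} ?D = 0" by (simp add: integral_unique)
  moreover have "integral {0..pi/2} ?D = QQ x - (1 - x) * 2 * RR x"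
    unfolding QQ_def RR_def
    by (simp only: integral_diff[OF int_Q[OF assms] integrable_on_mult_right[OF int_R[OF assms]]] integral_mult_right)
  ultimately show ?thesis by simp
qed

lemma PP_nonneg: "x < 1 \<Longrightarrow> 0 \<le> PP x"
  unfolding PP_def by (rule integral_nonneg[OF int_P]) (auto intro!: divide_nonneg_pos sw_pos)

lemma QQ_ge: assumes "0 \<le> x" "x < 1" shows "pi/4 \<le> QQ x"
proof -
  have "integral {0..pi/2} (\<lambda>t. (cos t)^2) \<le> QQ x" unfolding QQ_def
  proof (rule integral_le[OF _ int_Q[OF assms(2)]])
    show "(\<lambda>t. (cos t)^2) integrable_on {0..pi/2}" using int_cos2 by blast
    fix t
    have "sqrt (1 - x * (sin t)^2) \<le> 1" using w_le1[OF assms(1)] by simp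
    moreover have "0 < sqrt (1 - x * (sin t)^2)" using sw_pos[OF assms(2)] .
    ultimately show "(cos t)^2 \<le> (cos t)^2 / sqrt (1 - x * (sin t)^2)"
      by (simp add: le_divide_eq mult_left_le)
  qed
  then show ?thesis using integral_unique[OF int_cos2] by simp
qed

lemma sPP: assumes "0 \<le> x" "x < 1" shows "sqrt (1 - x) * PP x \<le> pi/4"
proof -
  have "sqrt (1 - x) * PP x = integral {0..pi/2} (\<lambda>t. sqrt (1 - x) * ((sin t)^2 / sqrt (1 - x * (sin t)^2)))"
    unfolding PP_def by (simp only: integral_mult_right)
  also have "\<dots> \<le> integral {0..pi/2} (\<lambda>t. (sin t)^2)"
  proof (rule integral_le[OF integrable_on_mult_right[OF int_P[OF assms(2)]]])
    show "(\<lambda>t. (sin t)^2) integrable_on {0..pi/2}" using int_sin2 by blast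
    fix t
    have le: "sqrt (1 - x) \<le> sqrt (1 - x * (sin t)^2)" using w_ge[OF assms] by simp
    have p: "0 < sqrt (1 - x * (sin t)^2)" using sw_pos[OF assms(2)] .
    have "sqrt (1 - x) * (sin t)^2 \<le> sqrt (1 - x * (sin t)^2) * (sin t)^2"
      using le by (simp add: mult_right_mono)
    then show "sqrt (1 - x) * ((sin t)^2 / sqrt (1 - x * (sin t)^2)) \<le> (sin t)^2"
      using p by (simp add: divide_simps mult.commute)
  qed
  also have "\<dots> = pi/4" using integral_unique[OF int_sin2] .
  finally show ?thesis .
qed

lemma ee_le: assumes "0 \<le> x" shows "ee x \<le> pi/2"
proof -
  have "ee x \<le> integral {0..pi/2} (\<lambda>t. 1::real)" unfolding ee_def
    by (rule integral_le[OF int_e]) (use w_le1[OF assms] in auto)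
  then show ?thesis by simp
qed

lemma kk_nonneg: "x < 1 \<Longrightarrow> 0 \<le> kk x"
  unfolding kk_def by (rule integral_nonneg[OF int_k]) (auto simp: w_le)

lemma kk0: "kk 0 = pi/2" unfolding kk_def by simp
lemma ee0: "ee 0 = pi/2" unfolding ee_def by simp

lemma pw_low: fixes c S C :: real
  assumes c: "0 < c" "c < 1" and S: "0 \<le> S" "S \<le> 1" and C: "0 \<le> C" "S^2 + C^2 = 1"
  shows "C / (2 * (1 - c * S)) \<le> 1 / sqrt (1 - c^2 * S^2)"
proof -
  have cS: "c * S \<le> S" using c S by (simp add: mult_left_le_one_le)
  have "c * S \<le> c * 1" using c S by (intro mult_left_mono) auto
  then have cS1: "c * S < 1" using c by linarith
  have W: "1 - c^2 * S^2 = (1 - c*S) * (1 + c*S)" by (simp add: algebra_simps power2_eq_square)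
  have cS0: "0 \<le> c * S" using c S by simp
  have Wp: "0 < 1 - c^2 * S^2" unfolding W using cS1 cS0 by (intro mult_pos_pos) auto
  have C2: "C^2 = (1 - S) * (1 + S)" using C(2) by (simp add: algebra_simps power2_eq_square)
  have a: "(1 - S) \<le> (1 - c*S)" using cS by simp
  have b: "(1 + S) * (1 + c*S) \<le> 2 * 2" using S cS c by (intro mult_mono) auto
  have "C^2 * (1 - c^2 * S^2) = ((1 - S) * (1 - c*S)) * ((1 + S) * (1 + c*S))"
    unfolding W C2 by (simp add: algebra_simps)
  also have "\<dots> \<le> ((1 - c*S) * (1 - c*S)) * (2 * 2)"
    using a b S cS1 c by (intro mult_mono) (auto intro!: mult_nonneg_nonneg)
  also have "\<dots> = (2 * (1 - c*S))^2" by (simp add: power2_eq_square algebra_simps)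
  finally have "(C * sqrt (1 - c^2 * S^2))^2 \<le> (2 * (1 - c*S))^2"
    using Wp by (simp add: power_mult_distrib)
  then have le: "C * sqrt (1 - c^2 * S^2) \<le> 2 * (1 - c*S)"
    by (rule power2_le_imp_le) (use cS1 in simp)
  show ?thesis using le Wp cS1 by (simp add: divide_simps mult.commute)
qed

lemma kk_low: assumes c: "0 < c" "c < 1" shows "- ln (1 - c) / 2 \<le> kk (c^2)"
proof -
  let ?F = "\<lambda>t. - ln (1 - c * sin t) / (2 * c)"
  have cs: "\<And>t. c * sin t < 1"
  proof -
    fix t
    have "c * sin t \<le> c * 1" using c by (intro mult_left_mono) auto
    then show "c * sin t < 1" using c by linarith
  qed
  have int: "((\<lambda>t. cos t / (2 * (1 - c * sin t))) has_integral ?F (pi/2) - ?F 0) {0..pi/2}"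
  proof (rule ftc_real)
    fix t :: real
    show "(?F has_real_derivative cos t / (2 * (1 - c * sin t))) (at t)"
      using cs[of t] c by (auto intro!: derivative_eq_intros simp: field_simps)
  qed simp
  have "?F (pi/2) - ?F 0 \<le> kk (c^2)" unfolding kk_def
  proof (rule has_integral_le[OF int integrable_integral[OF int_k]])
    show "c^2 < 1" using c by (simp add: power_less_one_iff)
    fix t assume t: "t \<in> {0..pi/2}"
    then have "0 \<le> sin t" by (intro sin_ge_zero) auto
    moreover have "0 \<le> cos t" using t by (intro cos_ge_zero) auto
    ultimately show "cos t / (2 * (1 - c * sin t)) \<le> 1 / sqrt (1 - c^2 * (sin t)^2)"
      using c by (intro pw_low) (auto simp: sin_le_one)
  qed
  moreover have "?F (pi/2) - ?F 0 = - ln (1 - c) / (2 * c)" by simp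
  moreover have "- ln (1 - c) / 2 \<le> - ln (1 - c) / (2 * c)"
  proof -
    have "0 \<le> - ln (1 - c)" using c by simp
    then show ?thesis using c by (simp add: divide_simps mult_left_le_one_le)
  qed
  ultimately show ?thesis by linarith
qed

definition Fk :: "real \<Rightarrow> real" where "Fk x = (2 - x) * kk x - 2 * ee x"
definition Gk :: "real \<Rightarrow> real" where "Gk x = (ee x)^2 - (1 - x) * (kk x)^2"
definition Phi :: "real \<Rightarrow> real" where "Phi x = Fk x - 2 / pi * Gk x"

lemma Fk_deriv0: assumes "x \<in> {-1<..<1}"
  shows "(Fk has_real_derivative (- kk x + (2 - x) * RR x + PP x)) (at x)"
proof -
  have "((\<lambda>x. (2 - x) * kk x - 2 * ee x) has_real_derivative (- kk x + (2 - x) * RR x + PP x)) (at x)"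
    using kk_deriv[OF assms] ee_deriv[OF assms]
    by (auto intro!: derivative_eq_intros)
  then show ?thesis by (simp add: Fk_def[abs_def])
qed

lemma Gk_deriv0: assumes "x \<in> {-1<..<1}"
  shows "(Gk has_real_derivative (- ee x * PP x + (kk x)^2 - (1 - x) * 2 * kk x * RR x)) (at x)"
proof -
  have "((\<lambda>x. (ee x)^2 - (1 - x) * (kk x)^2) has_real_derivative (- ee x * PP x + (kk x)^2 - (1 - x) * 2 * kk x * RR x)) (at x)"
    using kk_deriv[OF assms] ee_deriv[OF assms]
    by (auto intro!: derivative_eq_intros simp: algebra_simps)
  then show ?thesis by (simp add: Gk_def[abs_def])
qed

lemma Fk_deriv: assumes "x \<in> {-1<..<1}"
  shows "(Fk has_real_derivative x * QQ x / (2 * (1 - x))) (at x)"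
proof -
  have x1: "x < 1" using assms by simp
  have "(- kk x + (2 - x) * RR x + PP x) * (2 * (1 - x)) = x * QQ x"
    using kPQ[OF x1] QR[OF x1] by algebra
  then have "- kk x + (2 - x) * RR x + PP x = x * QQ x / (2 * (1 - x))"
    using x1 by (simp add: eq_divide_eq)
  then show ?thesis using Fk_deriv0[OF assms] by simp
qed

lemma Gk_deriv: assumes "x \<in> {-1<..<1}"
  shows "(Gk has_real_derivative x * (PP x)^2) (at x)"
proof -
  have x1: "x < 1" using assms by simp
  have "- ee x * PP x + (kk x)^2 - (1 - x) * 2 * kk x * RR x = x * (PP x)^2"
    using kPQ[OF x1] QR[OF x1] ekP[OF x1] by algebra
  then show ?thesis using Gk_deriv0[OF assms] by simp
qed

lemma Phi_deriv: assumes "x \<in> {-1<..<1}"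
  shows "(Phi has_real_derivative x * QQ x / (2 * (1 - x)) - 2 / pi * (x * (PP x)^2)) (at x)"
proof -
  have "((\<lambda>x. Fk x - 2 / pi * Gk x) has_real_derivative x * QQ x / (2 * (1 - x)) - 2 / pi * (x * (PP x)^2)) (at x)"
    using Fk_deriv[OF assms] Gk_deriv[OF assms] by (auto intro!: derivative_eq_intros)
  then show ?thesis by (simp add: Phi_def[abs_def])
qed

lemma Fk0: "Fk 0 = 0" by (simp add: Fk_def kk0 ee0)
lemma Phi0: "Phi 0 = 0" by (simp add: Phi_def Fk0 Gk_def kk0 ee0)

lemma alg2: fixes x p q :: real
  assumes "0 \<le> x" "x < 1" "pi/4 \<le> q" "0 \<le> p" "sqrt (1 - x) * p \<le> pi/4"
  shows "0 \<le> x * q / (2 * (1 - x)) - 2 / pi * (x * p^2)"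
proof -
  have "(sqrt (1 - x) * p)^2 \<le> (pi/4)^2"
    using assms by (intro power_mono) auto
  then have h: "(1 - x) * p^2 \<le> pi^2/16" using assms by (simp add: power_mult_distrib power_divide)
  have "4 * ((1 - x) * p^2) \<le> pi * q"
  proof -
    have "pi * (pi/4) \<le> pi * q" using assms by (intro mult_left_mono) auto
    then have a: "pi * pi \<le> 4 * (pi * q)" by simp
    have h': "16 * ((1 - x) * p^2) \<le> pi * pi" using h by (simp add: power2_eq_square)
    show ?thesis using a h' by linarith
  qed
  then have "2 / pi * p^2 \<le> q / (2 * (1 - x))"
    using assms pi_gt_zero by (simp add: divide_simps algebra_simps)
  then have "x * (2 / pi * p^2) \<le> x * (q / (2 * (1 - x)))"
    using assms by (intro mult_left_mono) auto
  then show ?thesis by (simp add: algebra_simps)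
qed

lemma K_kk: "0 \<le> x \<Longrightarrow> K x = kk x"
  by (simp add: K_def ellK_def kk_def)
lemma E_ee: "0 \<le> x \<Longrightarrow> E x = ee x"
  by (simp add: E_def ellE_def ee_def)

lemma Fk_cont: assumes "0 \<le> a" "b < 1" shows "continuous_on {a..b} Fk"
  using assms by (intro continuous_at_imp_continuous_on ballI DERIV_isCont[OF Fk_deriv]) auto

lemma Phi_cont: assumes "0 \<le> a" "b < 1" shows "continuous_on {a..b} Phi"
  using assms by (intro continuous_at_imp_continuous_on ballI DERIV_isCont[OF Phi_deriv]) auto

lemma Fk_less: assumes "0 \<le> a" "a < b" "b < 1" shows "Fk a < Fk b"
proof (rule DERIV_pos_imp_increasing_open[OF assms(2) _ Fk_cont])
  fix x assume x: "a < x" "x < b"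
  have q: "pi/4 \<le> QQ x" using QQ_ge[of x] x assms by simp
  have "0 < QQ x" using q pi_gt_zero by linarith
  moreover have "0 < x" "x < 1" using x assms by auto
  ultimately have "0 < x * QQ x / (2 * (1 - x))"
    by (intro divide_pos_pos mult_pos_pos) auto
  then show "\<exists>y. (Fk has_real_derivative y) (at x) \<and> 0 < y"
    using Fk_deriv[of x] x assms by auto
qed (use assms in auto)

lemma Phi_nonneg: assumes "0 \<le> x" "x < 1" shows "0 \<le> Phi x"
proof -
  have "Phi 0 \<le> Phi x"
  proof (rule DERIV_nonneg_imp_increasing_open[OF assms(1) _ Phi_cont])
    fix y assume y: "0 < y" "y < x"
    then show "\<exists>d. (Phi has_real_derivative d) (at y) \<and> 0 \<le> d"
      using Phi_deriv[of y] assms alg2[OF _ _ QQ_ge PP_nonneg sPP, of y] by auto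
  qed (use assms in auto)
  then show ?thesis using Phi0 by simp
qed

theorem mainTheorem6:
  shows "strict_mono_on {0<..<1} (\<lambda>x. (2 - x) * K x - 2 * E x)
       \<and> (\<lambda>x. (2 - x) * K x - 2 * E x) ` {0<..<1} = {0<..}
       \<and> (\<forall>x::real. 0 < x \<and> x < 1 \<longrightarrow>
            (2 - x) * K x - 2 * E x \<ge> 2 / pi * ((E x)\<^sup>2 - (1 - x) * (K x)\<^sup>2))"
proof (intro conjI allI impI)
  have FF: "\<And>x. 0 \<le> x \<Longrightarrow> (2 - x) * K x - 2 * E x = Fk x"
    by (simp add: K_kk E_ee Fk_def)
  show "strict_mono_on {0<..<1} (\<lambda>x. (2 - x) * K x - 2 * E x)"
    by (rule strict_mono_onI) (auto simp: FF intro!: Fk_less)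
  show "(\<lambda>x. (2 - x) * K x - 2 * E x) ` {0<..<1} = {0<..}"
  proof
    show "(\<lambda>x. (2 - x) * K x - 2 * E x) ` {0<..<1} \<subseteq> {0<..}"
      using Fk_less[of 0] Fk0 by (auto simp: FF)
    show "{0<..} \<subseteq> (\<lambda>x. (2 - x) * K x - 2 * E x) ` {0<..<1}"
    proof
      fix y :: real assume "y \<in> {0<..}"
      then have y: "0 < y" by simp
      define c where "c = 1 - exp (- 2 * (y + pi))"
      have "- 2 * (y + pi) < 0" using y pi_gt_zero by (smt (verit))
      then have c0: "0 < c" unfolding c_def by simp
      have c1: "c < 1" unfolding c_def by simp
      have "- ln (1 - c) / 2 = y + pi" unfolding c_def by simp
      then have kl: "y + pi \<le> kk (c^2)" using kk_low[OF c0 c1] by simp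
      have x2: "0 \<le> c^2" "c^2 < 1" using c0 c1 by (auto simp: power_less_one_iff)
      have "c^2 * kk (c^2) \<le> kk (c^2)"
        using kk_nonneg[OF x2(2)] x2 by (intro mult_left_le_one_le) auto
      then have "kk (c^2) \<le> (2 - c^2) * kk (c^2)"
        by (simp add: algebra_simps)
      moreover have "ee (c^2) \<le> pi/2" using ee_le[OF x2(1)] .
      ultimately have "y \<le> Fk (c^2)" using kl unfolding Fk_def by linarith
      then obtain z where z: "0 \<le> z" "z \<le> c^2" "Fk z = y"
        using IVT'[of Fk 0 y "c^2"] Fk0 y x2 Fk_cont[of 0 "c^2"] by auto
      have "z \<noteq> 0" using z Fk0 y by auto
      then have "z \<in> {0<..<1}" using z x2 by auto
      then show "y \<in> (\<lambda>x. (2 - x) * K x - 2 * E x) ` {0<..<1}"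
        using z FF[of z] by (auto intro!: image_eqI[of _ _ z])
    qed
  qed
  fix x :: real assume x: "0 < x \<and> x < 1"
  have "0 \<le> Phi x" using Phi_nonneg x by auto
  then show "(2 - x) * K x - 2 * E x \<ge> 2 / pi * ((E x)\<^sup>2 - (1 - x) * (K x)\<^sup>2)"
    using x by (simp add: Phi_def Fk_def Gk_def K_kk E_ee)
qed

end
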